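(* There is a universal constant $C>0$ such that the following holds. For any integers $n\ge 2$, $k\ge 2$ and any $\varepsilon\in(0,1)$, there is a map $F:\{0,1\}^n\to\mathcal{Q}_s$ with $s\le C\log n\cdot\log(1/\varepsilon)$ such that: if each player $\ell\in[k]$, holding input $x_\ell\in\{0,1\}^n$, sends the quantum state $F(x_\ell)$ to the referee, then for any indices $i,j\in[k]$ and any strings $y,z\in\{0,1\}^n$ known to the referee (and not necessarily to the players), the referee can compute $\mathrm{MEQ}_{k,n}(i,j,y,z)$ with error probability at most $\varepsilon$, for every choice of inputs $x_1,\dots,x_k$.
   Context: $[k]=\{1,\dots,k\}$. For $s\ge1$, $\mathcal{Q}_s$ denotes the set of $s$-qubit pure quantum states (unit vectors in $\mathbb{C}^{2^s}$). There are $k$ players, player $\ell$ holding a private input $x_\ell\in\{0,1\}^n$, and a referee who does not know the inputs. The modified equality query is $\mathrm{MEQ}_{k,n}(i,j,y,z)=1$ if $x_i\oplus y=x_j\oplus z$ and $0$ otherwise, where $\oplus$ is bitwise XOR. "The referee can compute the query with error at most $\varepsilon$" means the referee has a quantum procedure (quantum operations and measurements, depending on $i,j,y,z$) acting on the received states whose output equals $\mathrm{MEQ}_{k,n}(i,j,y,z)$ with probability at least $1-\varepsilon$. The players share no randomness and no entanglement. *)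

theory Defs
  imports Complex_Main "HOL-Library.FuncSet"
begin

definition bxor :: "bool list \<Rightarrow> bool list \<Rightarrow> bool list" where
  "bxor u v = map2 (\<noteq>) u v"

definition MEQ :: "(nat \<Rightarrow> bool list) \<Rightarrow> nat \<Rightarrow> nat \<Rightarrow> bool list \<Rightarrow> bool list \<Rightarrow> bool" where
  "MEQ x i j y z \<longleftrightarrow> bxor (x i) y = bxor (x j) z"

text \<open>An s-qubit pure state: a unit vector in C^(2^s), represented as a function
nat => complex supported on {..<2^s}.\<close>
definition qstate :: "nat \<Rightarrow> (nat \<Rightarrow> complex) \<Rightarrow> bool" where
  "qstate s q \<longleftrightarrow> (\<forall>a\<ge>2^s. q a = 0) \<and> (\<Sum>a<2^s. (cmod (q a))\<^sup>2) = 1"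

text \<open>Computational basis of the joint system of players 1..k, each holding s qubits:
basis vectors indexed by functions {1..k} -> {..<2^s}.\<close>
definition jbasis :: "nat \<Rightarrow> nat \<Rightarrow> (nat \<Rightarrow> nat) set" where
  "jbasis k s = PiE {1..k} (\<lambda>_. {..<2^s})"

text \<open>The joint (tensor product) state F(x_1) \<otimes> ... \<otimes> F(x_k).\<close>
definition jstate :: "nat \<Rightarrow> (bool list \<Rightarrow> nat \<Rightarrow> complex) \<Rightarrow> (nat \<Rightarrow> bool list)
    \<Rightarrow> (nat \<Rightarrow> nat) \<Rightarrow> complex" where
  "jstate k F x f = (\<Prod>l\<in>{1..k}. F (x l) (f l))"

definition qform :: "'b set \<Rightarrow> ('b \<Rightarrow> 'b \<Rightarrow> complex) \<Rightarrow> ('b \<Rightarrow> complex) \<Rightarrow> complex" where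
  "qform B M v = (\<Sum>f\<in>B. \<Sum>g\<in>B. cnj (v f) * M f g * v g)"

text \<open>A two-outcome measurement {M, I - M} is the most general quantum
procedure with binary output (quantum operations followed by a measurement).\<close>
definition effect :: "'b set \<Rightarrow> ('b \<Rightarrow> 'b \<Rightarrow> complex) \<Rightarrow> bool" where
  "effect B M \<longleftrightarrow> (\<forall>f\<in>B. \<forall>g\<in>B. M g f = cnj (M f g)) \<and>
     (\<forall>v. 0 \<le> Re (qform B M v) \<and> Re (qform B M v) \<le> (\<Sum>f\<in>B. (cmod (v f))\<^sup>2))"

definition prob_one :: "nat \<Rightarrow> nat \<Rightarrow> (bool list \<Rightarrow> nat \<Rightarrow> complex) \<Rightarrow> (nat \<Rightarrow> bool list)
    \<Rightarrow> ((nat \<Rightarrow> nat) \<Rightarrow> (nat \<Rightarrow> nat) \<Rightarrow> complex) \<Rightarrow> real" where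
  "prob_one k s F x M = Re (qform (jbasis k s) M (jstate k F x))"

definition referee_computes :: "nat \<Rightarrow> nat \<Rightarrow> nat \<Rightarrow> (bool list \<Rightarrow> nat \<Rightarrow> complex) \<Rightarrow> real
    \<Rightarrow> nat \<Rightarrow> nat \<Rightarrow> bool list \<Rightarrow> bool list \<Rightarrow> bool" where
  "referee_computes k n s F \<epsilon> i j y z \<longleftrightarrow>
     (\<exists>M. effect (jbasis k s) M \<and>
        (\<forall>x. (\<forall>l\<in>{1..k}. length (x l) = n) \<longrightarrow>
           (if MEQ x i j y z then prob_one k s F x M \<ge> 1 - \<epsilon>
            else 1 - prob_one k s F x M \<ge> 1 - \<epsilon>)))"

end

theory Submission
  imports Defs "HOL-Analysis.Convex"
begin


definition sg :: "bool \<Rightarrow> complex" where "sg b = (if b then -1 else 1)"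

lemma sg_xor: "sg (a \<noteq> b) = sg a * sg b" by (simp add: sg_def)
lemma cmod_sg[simp]: "cmod (sg b) = 1" by (simp add: sg_def)
lemma sg_sq: "sg b * sg b = 1" by (simp add: sg_def)

definition ip :: "bool list \<Rightarrow> bool list \<Rightarrow> bool" where
  "ip v d = odd (card {q. q < length d \<and> v!q \<and> d!q})"

lemma odd_card_symdiff:
  assumes "finite A" "finite B"
  shows "odd (card ((A-B) \<union> (B-A))) = (odd (card A) \<noteq> odd (card B))"
proof -
  have "card ((A-B) \<union> (B-A)) = card (A-B) + card (B-A)"
    using assms by (intro card_Un_disjoint) auto
  moreover have "card A = card (A-B) + card (A \<inter> B)"
  proof -
    have "A = (A-B) \<union> (A \<inter> B)" by auto
    then have "card A = card ((A-B) \<union> (A \<inter> B))" by simp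
    also have "\<dots> = card (A-B) + card (A \<inter> B)" using assms by (intro card_Un_disjoint) auto
    finally show ?thesis .
  qed
  moreover have "card B = card (B-A) + card (A \<inter> B)"
  proof -
    have "B = (B-A) \<union> (A \<inter> B)" by auto
    then have "card B = card ((B-A) \<union> (A \<inter> B))" by simp
    also have "\<dots> = card (B-A) + card (A \<inter> B)" using assms by (intro card_Un_disjoint) auto
    finally show ?thesis .
  qed
  ultimately show ?thesis by auto
qed

lemma length_bxor[simp]: "length (bxor u v) = min (length u) (length v)"
  by (simp add: bxor_def)

lemma nth_bxor: "q < length u \<Longrightarrow> q < length v \<Longrightarrow> bxor u v ! q = (u!q \<noteq> v!q)"
  by (simp add: bxor_def)

lemma ip_bxor:
  assumes "length w = length w'"
  shows "ip v (bxor w w') = (ip v w \<noteq> ip v w')"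
proof -
  let ?A = "{q. q < length w \<and> v!q \<and> w!q}" and ?B = "{q. q < length w' \<and> v!q \<and> w'!q}"
  have "{q. q < length (bxor w w') \<and> v!q \<and> bxor w w' ! q} = (?A - ?B) \<union> (?B - ?A)"
    using assms by (auto simp: nth_bxor)
  then show ?thesis unfolding ip_def using odd_card_symdiff[of ?A ?B] by simp
qed

lemma ip_zero[simp]: "ip v (replicate n False) = False"
proof -
  have e: "{q. q < n \<and> v!q \<and> replicate n False ! q} = {}" by auto
  have "ip v (replicate n False) = odd (card {q. q < n \<and> v!q \<and> replicate n False ! q})"
    by (simp add: ip_def)
  also have "\<dots> = False" unfolding e by simp
  finally show ?thesis .
qed

lemma bxor_eq_zero:
  assumes "length w1 = n" "length w2 = n"
  shows "(bxor w1 w2 = replicate n False) = (w1 = w2)"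
proof
  assume "bxor w1 w2 = replicate n False"
  then have "\<forall>q<n. bxor w1 w2 ! q = False" by simp
  then show "w1 = w2" using assms by (intro nth_equalityI) (auto simp: nth_bxor)
next
  assume "w1 = w2" then show "bxor w1 w2 = replicate n False"
    using assms by (intro nth_equalityI) (auto simp: nth_bxor)
qed



definition dig :: "nat \<Rightarrow> nat \<Rightarrow> nat \<Rightarrow> nat" where "dig N c a = a div N^c mod N"

lemma dig_0: "dig N 0 a = a mod N" by (simp add: dig_def)
lemma dig_Suc: "dig N (Suc c) a = dig N c (a div N)"
  by (simp add: dig_def div_mult2_eq mult.commute)
lemma dig_lt: "0 < N \<Longrightarrow> dig N c a < N" by (simp add: dig_def)

lemma lt_mult_aux: "m < (N::nat) \<Longrightarrow> q < M \<Longrightarrow> m + N*q < N*M"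
proof -
  assume a: "m < N" "q < M"
  then have "m + N*q < N*(q+1)" by simp
  also have "\<dots> \<le> N*M" using a by (intro mult_le_mono2) auto
  finally show ?thesis .
qed

lemma sum_lessThan_mult:
  fixes f :: "nat \<Rightarrow> 'a::comm_monoid_add"
  assumes "0 < N"
  shows "(\<Sum>a<N*M. f a) = (\<Sum>m<N. \<Sum>q<M. f (m + N*q))"
proof -
  have "(\<Sum>a<N*M. f a) = (\<Sum>(m,q)\<in>{..<N}\<times>{..<M}. f (m + N*q))"
    by (rule sum.reindex_bij_witness[of _ "\<lambda>(m,q). m + N*q" "\<lambda>a. (a mod N, a div N)"])
       (use assms in \<open>auto simp: split: prod.splits intro: lt_mult_aux\<close>,
        metis less_mult_imp_div_less mult.commute)
  also have "\<dots> = (\<Sum>m<N. \<Sum>q<M. f (m + N*q))" by (simp add: sum.cartesian_product)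
  finally show ?thesis .
qed

lemma sum_dig_prod:
  fixes G :: "nat \<Rightarrow> nat \<Rightarrow> 'a::comm_semiring_1"
  assumes "0 < N"
  shows "(\<Sum>a<N^r. \<Sum>b<N^r. \<Prod>c<r. G (dig N c a) (dig N c b)) = (\<Sum>m<N. \<Sum>m'<N. G m m')^r"
proof (induction r)
  case 0 then show ?case by simp
next
  case (Suc r)
  let ?P = "\<lambda>a b. \<Prod>c<r. G (dig N c a) (dig N c b)"
  have pr: "(\<Prod>c<Suc r. G (dig N c a) (dig N c b)) = G (a mod N) (b mod N) * ?P (a div N) (b div N)" for a b
    unfolding prod.lessThan_Suc_shift by (simp add: dig_0 dig_Suc)
  have "(\<Sum>a<N^Suc r. \<Sum>b<N^Suc r. \<Prod>c<Suc r. G (dig N c a) (dig N c b))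
      = (\<Sum>m<N. \<Sum>q<N^r. \<Sum>m'<N. \<Sum>q'<N^r. G m m' * ?P q q')"
  proof -
    have "(\<Sum>a<N^Suc r. \<Sum>b<N^Suc r. \<Prod>c<Suc r. G (dig N c a) (dig N c b))
      = (\<Sum>m<N. \<Sum>q<N^r. \<Sum>m'<N. \<Sum>q'<N^r. \<Prod>c<Suc r. G (dig N c (m+N*q)) (dig N c (m'+N*q')))"
      by (simp only: power_Suc sum_lessThan_mult[OF assms])
    also have "\<dots> = (\<Sum>m<N. \<Sum>q<N^r. \<Sum>m'<N. \<Sum>q'<N^r. G m m' * ?P q q')"
      apply (intro sum.cong refl)
      apply (subst pr)
      using assms by simp
    finally show ?thesis .
  qed
  also have "\<dots> = (\<Sum>m<N. \<Sum>m'<N. \<Sum>q<N^r. \<Sum>q'<N^r. G m m' * ?P q q')"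
    by (rule sum.cong[OF refl], rule sum.swap)
  also have "\<dots> = (\<Sum>m<N. \<Sum>m'<N. G m m' * (\<Sum>q<N^r. \<Sum>q'<N^r. ?P q q'))"
    by (simp add: sum_distrib_left)
  also have "\<dots> = (\<Sum>m<N. \<Sum>m'<N. G m m') * (\<Sum>q<N^r. \<Sum>q'<N^r. ?P q q')"
    by (simp add: sum_distrib_right)
  finally show ?case using Suc by simp
qed

lemma dig_sum:
  assumes "0 < N" "\<forall>c<r. e c < N"
  shows "(\<Sum>c<r. e c * N^c) < N^r \<and> (\<forall>c<r. dig N c (\<Sum>c'<r. e c' * N^c') = e c)"
  using assms(2)
proof (induction r arbitrary: e)
  case 0 then show ?case by simp
next
  case (Suc r)
  let ?X = "\<Sum>c<r. e (Suc c) * N^c"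
  have IH: "?X < N^r \<and> (\<forall>c<r. dig N c ?X = e (Suc c))" using Suc by auto
  have eq: "(\<Sum>c<Suc r. e c * N^c) = e 0 + N * ?X"
    unfolding sum.lessThan_Suc_shift by (simp add: sum_distrib_left mult.assoc mult.left_commute)
  have e0: "e 0 < N" using Suc by auto
  have "e 0 + N * ?X < N * (?X + 1)" using e0 by simp
  also have "\<dots> \<le> N * N^r" using IH by (intro mult_le_mono2) auto
  finally have b: "e 0 + N * ?X < N^Suc r" by simp
  have d: "dig N c (e 0 + N * ?X) = e c" if "c < Suc r" for c
  proof (cases c)
    case 0 then show ?thesis using e0 by (simp add: dig_0)
  next
    case (Suc c') then show ?thesis using IH that e0 assms(1) by (simp add: dig_Suc)
  qed
  show ?case using b d eq by simp
qed

lemma dig_expand: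
  shows "(\<Sum>c<r. dig N c a * N^c) = a mod N^r"
proof (induction r)
  case 0 then show ?case by simp
next
  case (Suc r)
  have "a mod (N^r * N) = N^r * (a div N^r mod N) + a mod N^r" by (rule mod_mult2_eq)
  then show ?case using Suc by (simp add: dig_def mult.commute)
qed

definition mix :: "nat \<Rightarrow> nat \<Rightarrow> nat set \<Rightarrow> nat \<Rightarrow> nat \<Rightarrow> nat" where
  "mix N r \<tau> a b = (\<Sum>c<r. (if c \<in> \<tau> then dig N c b else dig N c a) * N^c)"

lemma mix_props:
  assumes "0 < N"
  shows "mix N r \<tau> a b < N^r" and "c < r \<Longrightarrow> dig N c (mix N r \<tau> a b) = (if c \<in> \<tau> then dig N c b else dig N c a)"
  using dig_sum[OF assms, of r "\<lambda>c. (if c \<in> \<tau> then dig N c b else dig N c a)"] assms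
  by (auto simp: mix_def dig_lt)

lemma mix_invol:
  assumes "0 < N" "a < N^r"
  shows "mix N r \<tau> (mix N r \<tau> a b) (mix N r \<tau> b a) = a"
proof -
  have "mix N r \<tau> (mix N r \<tau> a b) (mix N r \<tau> b a) = (\<Sum>c<r. dig N c a * N^c)"
    unfolding mix_def[of N r \<tau> "mix N r \<tau> a b"]
    by (intro sum.cong refl) (simp add: mix_props[OF assms(1)])
  also have "\<dots> = a" using assms by (simp add: dig_expand)
  finally show ?thesis .
qed



lemma sum_PiE_insert:
  fixes f :: "('a \<Rightarrow> 'b) \<Rightarrow> 'c::comm_monoid_add"
  assumes "x \<notin> A"
  shows "(\<Sum>g\<in>PiE (insert x A) B. f g) = (\<Sum>y\<in>B x. \<Sum>g\<in>PiE A B. f (g(x := y)))"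
proof -
  have "(\<Sum>g\<in>PiE (insert x A) B. f g) = (\<Sum>(y,g)\<in>B x \<times> PiE A B. f (g(x := y)))"
    using assms
    by (intro sum.reindex_bij_witness[of _ "\<lambda>(y,g). g(x := y)" "\<lambda>g. (g x, g(x := undefined))"])
       (auto simp: PiE_def extensional_def)
  also have "\<dots> = (\<Sum>y\<in>B x. \<Sum>g\<in>PiE A B. f (g(x := y)))"
    by (subst sum.cartesian_product) auto
  finally show ?thesis .
qed

lemma sum_PiE_pair:
  fixes H :: "'b \<Rightarrow> 'b \<Rightarrow> 'c::comm_semiring_1"
  assumes "finite I" "i \<in> I" "j \<in> I" "i \<noteq> j"
  shows "(\<Sum>h\<in>PiE I (\<lambda>_. S). H (h i) (h j)) = of_nat (card S ^ (card I - 2)) * (\<Sum>a\<in>S. \<Sum>b\<in>S. H a b)"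
proof -
  define J where "J = I - {i,j}"
  have I: "I = insert i (insert j J)" using assms unfolding J_def by auto
  have nJ: "i \<notin> insert j J" "j \<notin> J" using assms unfolding J_def by auto
  have cJ: "card J = card I - 2" using assms unfolding J_def by (simp add: card_Diff_subset)
  have "(\<Sum>h\<in>PiE I (\<lambda>_. S). H (h i) (h j)) = (\<Sum>a\<in>S. \<Sum>g\<in>PiE (insert j J) (\<lambda>_. S). H a (g j))"
    unfolding I using nJ assms(4) by (subst sum_PiE_insert) auto
  also have "\<dots> = (\<Sum>a\<in>S. \<Sum>b\<in>S. \<Sum>g\<in>PiE J (\<lambda>_. S). H a b)"
    using nJ by (intro sum.cong refl) (subst sum_PiE_insert, auto)
  also have "\<dots> = (\<Sum>a\<in>S. \<Sum>b\<in>S. H a b * of_nat (card (PiE J (\<lambda>_. S))))"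
    by (simp add: mult.commute)
  also have "\<dots> = (\<Sum>a\<in>S. \<Sum>b\<in>S. H a b) * of_nat (card (PiE J (\<lambda>_. S)))"
    by (simp only: sum_distrib_right)
  also have "card (PiE J (\<lambda>_. S)) = card S ^ (card I - 2)"
    using assms(1) unfolding J_def by (simp add: card_PiE cJ[unfolded J_def])
  finally show ?thesis by (simp add: mult.commute)
qed

lemma jstate_norm:
  assumes "\<forall>l\<in>{1..k}. qstate s (F (x l))"
  shows "(\<Sum>h\<in>jbasis k s. (cmod (jstate k F x h))\<^sup>2) = 1"
proof -
  have "(\<Sum>h\<in>jbasis k s. (cmod (jstate k F x h))\<^sup>2) = (\<Sum>h\<in>jbasis k s. \<Prod>l\<in>{1..k}. (cmod (F (x l) (h l)))\<^sup>2)"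
    unfolding jstate_def by (simp add: prod_norm[symmetric] prod_power_distrib)
  also have "\<dots> = (\<Prod>l\<in>{1..k}. \<Sum>a<2^s. (cmod (F (x l) a))\<^sup>2)"
    unfolding jbasis_def by (subst prod_sum_PiE) auto
  also have "\<dots> = 1" using assms by (simp add: qstate_def)
  finally show ?thesis .
qed

lemma finite_jbasis[simp]: "finite (jbasis k s)"
  unfolding jbasis_def by (simp add: finite_PiE)

lemma cnj_mult_self: "cnj z * z = complex_of_real ((cmod z)\<^sup>2)"
  using complex_norm_square[of z] by (simp add: mult.commute)

lemma qform_scaled_id:
  assumes "finite B" shows "qform B (\<lambda>f g. if f = g then complex_of_real c else 0) v = complex_of_real (c * (\<Sum>f\<in>B. (cmod (v f))\<^sup>2))"
proof -
  have "qform B (\<lambda>f g. if f = g then complex_of_real c else 0) v = (\<Sum>f\<in>B. cnj (v f) * c * v f)"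
    unfolding qform_def using assms by (intro sum.cong refl) (simp add: if_distrib if_distribR sum.delta cong: if_cong)
  also have "\<dots> = (\<Sum>f\<in>B. complex_of_real (c * (cmod (v f))\<^sup>2))"
  proof (intro sum.cong refl)
    fix f
    have "cnj (v f) * c * v f = complex_of_real c * (cnj (v f) * v f)" by (simp add: mult_ac)
    also have "\<dots> = complex_of_real c * complex_of_real ((cmod (v f))\<^sup>2)" by (simp only: cnj_mult_self)
    also have "\<dots> = complex_of_real (c * (cmod (v f))\<^sup>2)" by simp
    finally show "cnj (v f) * c * v f = complex_of_real (c * (cmod (v f))\<^sup>2)" .
  qed
  finally show ?thesis by (simp add: sum_distrib_left)
qed

lemma effect_scaled_id:
  assumes "0 \<le> c" "c \<le> 1" "finite B"
  shows "effect B (\<lambda>f g. if f = g then complex_of_real c else 0)"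
  unfolding effect_def qform_scaled_id[OF assms(3)]
  using assms by (auto intro!: mult_nonneg_nonneg sum_nonneg mult_left_le_one_le)

lemma qform_gram:
  assumes "finite B"
  shows "qform B (\<lambda>f g. \<Sum>h\<in>B. cnj (T h f) * T h g) v = complex_of_real (\<Sum>h\<in>B. (cmod (\<Sum>g\<in>B. T h g * v g))\<^sup>2)"
proof -
  let ?X = "\<lambda>f g h. cnj (T h f * v f) * (T h g * v g)"
  have "qform B (\<lambda>f g. \<Sum>h\<in>B. cnj (T h f) * T h g) v = (\<Sum>f\<in>B. \<Sum>g\<in>B. \<Sum>h\<in>B. ?X f g h)"
    unfolding qform_def by (intro sum.cong refl) (simp add: sum_distrib_left sum_distrib_right mult_ac)
  also have "\<dots> = (\<Sum>f\<in>B. \<Sum>h\<in>B. \<Sum>g\<in>B. ?X f g h)"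
    by (rule sum.cong[OF refl], rule sum.swap)
  also have "\<dots> = (\<Sum>h\<in>B. \<Sum>f\<in>B. \<Sum>g\<in>B. ?X f g h)"
    by (rule sum.swap)
  also have "\<dots> = (\<Sum>h\<in>B. cnj (\<Sum>f\<in>B. T h f * v f) * (\<Sum>g\<in>B. T h g * v g))"
    by (simp only: cnj_sum sum_distrib_right) (simp only: sum_distrib_left)
  also have "\<dots> = (\<Sum>h\<in>B. complex_of_real ((cmod (\<Sum>g\<in>B. T h g * v g))\<^sup>2))"
    by (intro sum.cong refl) (rule cnj_mult_self)
  finally show ?thesis by simp
qed

lemma effect_gram:
  assumes "finite B" "\<And>v. (\<Sum>h\<in>B. (cmod (\<Sum>g\<in>B. T h g * v g))\<^sup>2) \<le> (\<Sum>f\<in>B. (cmod (v f))\<^sup>2)"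
  shows "effect B (\<lambda>f g. \<Sum>h\<in>B. cnj (T h f) * T h g)"
  unfolding effect_def qform_gram[OF assms(1)]
  using assms(2) by (auto simp: sum_nonneg mult.commute)



definition Ssg :: "nat \<Rightarrow> nat \<Rightarrow> (nat \<Rightarrow> bool list) \<Rightarrow> bool list \<Rightarrow> nat \<Rightarrow> complex" where
  "Ssg N r cw u a = (\<Prod>c<r. sg (ip (cw (dig N c a)) u))"

definition Fst :: "nat \<Rightarrow> nat \<Rightarrow> (nat \<Rightarrow> bool list) \<Rightarrow> bool list \<Rightarrow> nat \<Rightarrow> complex" where
  "Fst N r cw u a = (if a < N^r then Ssg N r cw u a / complex_of_real (sqrt (real (N^r))) else 0)"

lemma cmod_Ssg[simp]: "cmod (Ssg N r cw u a) = 1"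
  by (simp add: Ssg_def prod_norm[symmetric])

lemma Ssg_bxor: "length u = length y \<Longrightarrow> Ssg N r cw (bxor u y) a = Ssg N r cw u a * Ssg N r cw y a"
  unfolding Ssg_def prod.distrib[symmetric] by (intro prod.cong refl) (simp add: sg_def ip_bxor)

lemma cmod_Fst_sq: "a < N^r \<Longrightarrow> (cmod (Fst N r cw u a))\<^sup>2 = 1 / real (N^r)"
  by (simp add: Fst_def norm_divide power_divide)

lemma qstate_Fst:
  assumes "N^r = 2^s"
  shows "qstate s (Fst N r cw u)"
proof -
  have "(\<Sum>a<(2::nat)^s. (cmod (Fst N r cw u a))\<^sup>2) = (\<Sum>a<(2::nat)^s. 1 / real (N^r))"
    using assms by (intro sum.cong refl) (simp add: cmod_Fst_sq)
  also have "\<dots> = 1" using assms by simp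
  finally show ?thesis unfolding qstate_def using assms by (simp add: Fst_def)
qed

definition sig :: "nat \<Rightarrow> nat \<Rightarrow> nat \<Rightarrow> nat \<Rightarrow> nat set \<Rightarrow> (nat \<Rightarrow> nat) \<Rightarrow> (nat \<Rightarrow> nat)" where
  "sig N r i j \<tau> h = h(i := mix N r \<tau> (h i) (h j), j := mix N r \<tau> (h j) (h i))"

lemma sig_in:
  assumes "0 < N" "N^r = 2^s" "i \<in> {1..k}" "j \<in> {1..k}" "h \<in> jbasis k s"
  shows "sig N r i j \<tau> h \<in> jbasis k s"
proof -
  have m: "\<And>a b. mix N r \<tau> a b < 2^s" using mix_props(1)[OF assms(1)] assms(2) by metis
  show ?thesis using assms m unfolding jbasis_def sig_def
    by (auto simp: PiE_iff extensional_def)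
qed

lemma sig_invol:
  assumes "0 < N" "N^r = 2^s" "i \<noteq> j" "h \<in> jbasis k s" "i \<in> {1..k}" "j \<in> {1..k}"
  shows "sig N r i j \<tau> (sig N r i j \<tau> h) = h"
proof -
  have hi: "h i < N^r" "h j < N^r" using assms unfolding jbasis_def by (auto simp: PiE_iff)
  show ?thesis using assms(3) mix_invol[OF assms(1) hi(1)] mix_invol[OF assms(1) hi(2)]
    unfolding sig_def by (auto simp: fun_eq_iff)
qed

lemma sum_sig_reindex:
  assumes "0 < N" "N^r = 2^s" "i \<noteq> j" "i \<in> {1..k}" "j \<in> {1..k}"
  shows "(\<Sum>h\<in>jbasis k s. f (sig N r i j \<tau> h)) = (\<Sum>h\<in>jbasis k s. f h)"
  by (rule sum.reindex_bij_witness[of _ "sig N r i j \<tau>" "sig N r i j \<tau>"])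
     (use assms sig_in sig_invol in auto)

definition Tm :: "nat \<Rightarrow> nat \<Rightarrow> (nat \<Rightarrow> bool list) \<Rightarrow> nat \<Rightarrow> nat \<Rightarrow> bool list \<Rightarrow> bool list
    \<Rightarrow> (nat \<Rightarrow> nat) \<Rightarrow> (nat \<Rightarrow> nat) \<Rightarrow> complex" where
  "Tm N r cw i j y z h g = (1 / 2^r) * (\<Sum>\<tau>\<in>Pow {..<r}.
      (if g = sig N r i j \<tau> h then Ssg N r cw y (g i) * Ssg N r cw z (g j) else 0))"

lemma Tm_apply:
  assumes "0 < N" "N^r = 2^s" "i \<in> {1..k}" "j \<in> {1..k}" "h \<in> jbasis k s"
  shows "(\<Sum>g\<in>jbasis k s. Tm N r cw i j y z h g * v g) = (1 / 2^r) * (\<Sum>\<tau>\<in>Pow {..<r}.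
      Ssg N r cw y (sig N r i j \<tau> h i) * Ssg N r cw z (sig N r i j \<tau> h j) * v (sig N r i j \<tau> h))"
  unfolding Tm_def
  apply (simp add: sum_distrib_left sum_distrib_right if_distrib if_distribR cong: if_cong)
  apply (subst sum.swap)
  using sig_in[OF assms] by (simp add: sum.delta')



lemma card_Pow_lt[simp]: "card (Pow {..<(r::nat)}) = 2^r"
  by (simp add: card_Pow)

lemma Tm_contr:
  assumes "0 < N" "N^r = 2^s" "i \<noteq> j" "i \<in> {1..k}" "j \<in> {1..k}"
  shows "(\<Sum>h\<in>jbasis k s. (cmod (\<Sum>g\<in>jbasis k s. Tm N r cw i j y z h g * v g))\<^sup>2)
         \<le> (\<Sum>f\<in>jbasis k s. (cmod (v f))\<^sup>2)"
proof -
  let ?B = "jbasis k s" and ?P = "Pow {..<r}"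
  let ?w = "\<lambda>h \<tau>. cmod (v (sig N r i j \<tau> h))"
  have pt: "(cmod (\<Sum>g\<in>?B. Tm N r cw i j y z h g * v g))\<^sup>2 \<le> (1/2^r) * (\<Sum>\<tau>\<in>?P. (?w h \<tau>)\<^sup>2)"
    if h: "h \<in> ?B" for h
  proof -
    have "cmod (\<Sum>g\<in>?B. Tm N r cw i j y z h g * v g) = (1/2^r) * cmod (\<Sum>\<tau>\<in>?P.
      Ssg N r cw y (sig N r i j \<tau> h i) * Ssg N r cw z (sig N r i j \<tau> h j) * v (sig N r i j \<tau> h))"
      by (simp add: Tm_apply[OF assms(1,2,4,5) h] norm_mult norm_divide norm_power)
    also have "\<dots> \<le> (1/2^r) * (\<Sum>\<tau>\<in>?P. ?w h \<tau>)"
      by (intro mult_left_mono order.trans[OF norm_sum]) (auto simp: norm_mult)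
    finally have 1: "cmod (\<Sum>g\<in>?B. Tm N r cw i j y z h g * v g) \<le> (1/2^r) * (\<Sum>\<tau>\<in>?P. ?w h \<tau>)" .
    have "(cmod (\<Sum>g\<in>?B. Tm N r cw i j y z h g * v g))\<^sup>2 \<le> ((1/2^r) * (\<Sum>\<tau>\<in>?P. ?w h \<tau>))\<^sup>2"
      by (rule power_mono[OF 1]) simp
    also have "\<dots> = (1/2^r)^2 * (\<Sum>\<tau>\<in>?P. ?w h \<tau>)\<^sup>2" by (rule power_mult_distrib)
    also have "\<dots> \<le> (1/2^r)^2 * ((\<Sum>\<tau>\<in>?P. (?w h \<tau>)\<^sup>2) * card ?P)"
      by (intro mult_left_mono sum_squared_le_sum_of_squares) simp
    also have "\<dots> = (1/2^r) * (\<Sum>\<tau>\<in>?P. (?w h \<tau>)\<^sup>2)"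
      by (simp add: power2_eq_square field_simps)
    finally show ?thesis .
  qed
  have "(\<Sum>h\<in>?B. (cmod (\<Sum>g\<in>?B. Tm N r cw i j y z h g * v g))\<^sup>2) \<le> (\<Sum>h\<in>?B. (1/2^r) * (\<Sum>\<tau>\<in>?P. (?w h \<tau>)\<^sup>2))"
    by (intro sum_mono pt)
  also have "\<dots> = (1/2^r) * (\<Sum>\<tau>\<in>?P. \<Sum>h\<in>?B. (cmod (v (sig N r i j \<tau> h)))\<^sup>2)"
    by (simp add: sum_distrib_left sum.swap[of _ ?B ?P])
  also have "\<dots> = (1/2^r) * (\<Sum>\<tau>\<in>?P. \<Sum>h\<in>?B. (cmod (v h))\<^sup>2)"
    using sum_sig_reindex[OF assms, where f="\<lambda>g. (cmod (v g))\<^sup>2"] by simp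
  also have "\<dots> = (\<Sum>f\<in>?B. (cmod (v f))\<^sup>2)" by simp
  finally show ?thesis .
qed

definition Mm where
  "Mm N r cw i j y z k s = (\<lambda>f g. \<Sum>h\<in>jbasis k s. cnj (Tm N r cw i j y z h f) * Tm N r cw i j y z h g)"

lemma Mm_effect:
  assumes "0 < N" "N^r = 2^s" "i \<noteq> j" "i \<in> {1..k}" "j \<in> {1..k}"
  shows "effect (jbasis k s) (Mm N r cw i j y z k s)"
  unfolding Mm_def by (rule effect_gram[OF finite_jbasis Tm_contr[OF assms]])

lemma prob_Mm:
  "prob_one k s F x (Mm N r cw i j y z k s) =
     (\<Sum>h\<in>jbasis k s. (cmod (\<Sum>g\<in>jbasis k s. Tm N r cw i j y z h g * jstate k F x g))\<^sup>2)"
  unfolding prob_one_def Mm_def qform_gram[OF finite_jbasis] by simp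



definition Gd :: "(nat \<Rightarrow> bool list) \<Rightarrow> bool list \<Rightarrow> nat \<Rightarrow> nat \<Rightarrow> real" where
  "Gd cw d m m' = (if ip (cw m) d = ip (cw m') d then 1 else 0)"

lemma sg_sum_sq: "(cmod (sg a + sg b))\<^sup>2 = (if a = b then 4 else 0)"
  by (cases a; cases b) (simp_all add: sg_def)

lemma XY_sq:
  assumes "length w1 = length w2"
  shows "(cmod (sg (ip (cw b) w1) * sg (ip (cw a) w2) + sg (ip (cw a) w1) * sg (ip (cw b) w2)))\<^sup>2
         = 4 * Gd cw (bxor w1 w2) a b"
proof -
  have "sg (ip (cw b) w1) * sg (ip (cw a) w2) + sg (ip (cw a) w1) * sg (ip (cw b) w2)
       = sg (ip (cw b) w1 \<noteq> ip (cw a) w2) + sg (ip (cw a) w1 \<noteq> ip (cw b) w2)"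
    by (simp only: sg_xor)
  then show ?thesis using assms by (simp only: sg_sum_sq Gd_def ip_bxor) auto
qed

lemma prod_if_sum:
  fixes X Y :: "'a \<Rightarrow> 'b::comm_semiring_1"
  assumes "finite A"
  shows "(\<Sum>\<tau>\<in>Pow A. \<Prod>c\<in>A. (if c \<in> \<tau> then X c else Y c)) = (\<Prod>c\<in>A. X c + Y c)"
proof -
  have "(\<Prod>c\<in>A. (if c \<in> \<tau> then X c else Y c)) = (\<Prod>c\<in>\<tau>. X c) * (\<Prod>c\<in>A-\<tau>. Y c)" if "\<tau> \<in> Pow A" for \<tau>
  proof -
    have "A \<inter> {c. c \<in> \<tau>} = \<tau>" "A \<inter> - {c. c \<in> \<tau>} = A - \<tau>" using that by auto
    then show ?thesis using assms by (simp add: prod.If_cases)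
  qed
  then show ?thesis using prod_add[OF assms, of X Y] by simp
qed

context
  fixes N r s k n :: nat and cw :: "nat \<Rightarrow> bool list" and x :: "nat \<Rightarrow> bool list"
    and i j :: nat and y z :: "bool list"
  assumes Npos: "0 < N" and Nrs: "N^r = 2^s" and ij: "i \<noteq> j" "i \<in> {1..k}" "j \<in> {1..k}"
    and xl: "\<forall>l\<in>{1..k}. length (x l) = n" and yl: "length y = n" and zl: "length z = n"
begin

private abbreviation "B \<equiv> jbasis k s"
private abbreviation "\<kappa> \<equiv> 1 / complex_of_real (sqrt (real (N^r)))"

lemma jstate_Fst:
  assumes "g \<in> B"
  shows "jstate k (Fst N r cw) x g = \<kappa>^k * (\<Prod>l\<in>{1..k}. Ssg N r cw (x l) (g l))"
proof -
  have "jstate k (Fst N r cw) x g = (\<Prod>l\<in>{1..k}. \<kappa> * Ssg N r cw (x l) (g l))"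
    unfolding jstate_def using assms Nrs by (intro prod.cong refl) (auto simp: jbasis_def Fst_def PiE_iff)
  also have "\<dots> = \<kappa>^k * (\<Prod>l\<in>{1..k}. Ssg N r cw (x l) (g l))"
    by (simp only: prod.distrib prod_constant) simp
  finally show ?thesis .
qed

lemma prod_split_ij:
  fixes f :: "nat \<Rightarrow> complex"
  shows "(\<Prod>l\<in>{1..k}. f l) = f i * f j * (\<Prod>l\<in>{1..k}-{i,j}. f l)"
proof -
  have "(\<Prod>l\<in>{1..k}. f l) = f i * (\<Prod>l\<in>{1..k}-{i}. f l)" using ij by (intro prod.remove) auto
  also have "(\<Prod>l\<in>{1..k}-{i}. f l) = f j * (\<Prod>l\<in>{1..k}-{i}-{j}. f l)" using ij by (intro prod.remove) auto
  also have "{1..k}-{i}-{j} = {1..k}-{i,j}" by auto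
  finally show ?thesis by (simp add: mult.assoc)
qed

lemma Ssg_mix:
  assumes "a < N^r" "b < N^r"
  shows "Ssg N r cw w1 (mix N r \<tau> a b) * Ssg N r cw w2 (mix N r \<tau> b a) =
    (\<Prod>c<r. if c \<in> \<tau> then sg (ip (cw (dig N c b)) w1) * sg (ip (cw (dig N c a)) w2)
                      else sg (ip (cw (dig N c a)) w1) * sg (ip (cw (dig N c b)) w2))"
  unfolding Ssg_def prod.distrib[symmetric]
  by (intro prod.cong refl) (simp add: mix_props[OF Npos])

lemma point_val:
  assumes h: "h \<in> B"
  shows "(cmod (\<Sum>g\<in>B. Tm N r cw i j y z h g * jstate k (Fst N r cw) x g))\<^sup>2
     = (1 / real (N^r))^k * (\<Prod>c<r. Gd cw (bxor (bxor (x i) y) (bxor (x j) z)) (dig N c (h i)) (dig N c (h j)))"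
proof -
  define w1 where "w1 = bxor (x i) y"
  define w2 where "w2 = bxor (x j) z"
  define R where "R = (\<Prod>l\<in>{1..k}-{i,j}. Ssg N r cw (x l) (h l))"
  define X where "X = (\<lambda>c. sg (ip (cw (dig N c (h j))) w1) * sg (ip (cw (dig N c (h i))) w2))"
  define Y where "Y = (\<lambda>c. sg (ip (cw (dig N c (h i))) w1) * sg (ip (cw (dig N c (h j))) w2))"
  have hb: "h i < N^r" "h j < N^r" using h ij Nrs unfolding jbasis_def by (auto simp: PiE_iff)
  have li: "length (x i) = length y" "length (x j) = length z" using xl yl zl ij by auto
  have lw: "length w1 = length w2" using li xl ij unfolding w1_def w2_def by simp
  have trm: "Ssg N r cw y (sig N r i j \<tau> h i) * Ssg N r cw z (sig N r i j \<tau> h j) *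
      jstate k (Fst N r cw) x (sig N r i j \<tau> h) = \<kappa>^k * R * (\<Prod>c<r. if c \<in> \<tau> then X c else Y c)" for \<tau>
  proof -
    let ?g = "sig N r i j \<tau> h"
    have gB: "?g \<in> B" using sig_in[OF Npos Nrs ij(2,3) h] .
    have rest: "(\<Prod>l\<in>{1..k}-{i,j}. Ssg N r cw (x l) (?g l)) = R"
      unfolding R_def sig_def by (intro prod.cong refl) auto
    have gi: "?g i = mix N r \<tau> (h i) (h j)" "?g j = mix N r \<tau> (h j) (h i)"
      using ij(1) unfolding sig_def by auto
    have "Ssg N r cw y (?g i) * Ssg N r cw z (?g j) * jstate k (Fst N r cw) x ?g
      = \<kappa>^k * R * ((Ssg N r cw (x i) (?g i) * Ssg N r cw y (?g i)) * (Ssg N r cw (x j) (?g j) * Ssg N r cw z (?g j)))"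
      unfolding jstate_Fst[OF gB] prod_split_ij[of "\<lambda>l. Ssg N r cw (x l) (?g l)"] rest
      by (simp add: mult_ac)
    also have "\<dots> = \<kappa>^k * R * (Ssg N r cw w1 (?g i) * Ssg N r cw w2 (?g j))"
      unfolding w1_def w2_def using li by (simp add: Ssg_bxor)
    also have "\<dots> = \<kappa>^k * R * (\<Prod>c<r. if c \<in> \<tau> then X c else Y c)"
      unfolding gi Ssg_mix[OF hb] X_def Y_def by simp
    finally show ?thesis .
  qed
  have "(\<Sum>g\<in>B. Tm N r cw i j y z h g * jstate k (Fst N r cw) x g)
      = (1/2^r) * (\<Sum>\<tau>\<in>Pow {..<r}. \<kappa>^k * R * (\<Prod>c<r. if c \<in> \<tau> then X c else Y c))"
    unfolding Tm_apply[OF Npos Nrs ij(2,3) h] trm ..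
  also have "\<dots> = (1/2^r) * \<kappa>^k * R * (\<Prod>c<r. X c + Y c)"
    by (simp add: sum_distrib_left[symmetric] prod_if_sum mult.assoc)
  finally have eq: "(\<Sum>g\<in>B. Tm N r cw i j y z h g * jstate k (Fst N r cw) x g)
      = (1/2^r) * \<kappa>^k * R * (\<Prod>c<r. X c + Y c)" .
  have cR: "cmod R = 1" unfolding R_def by (simp add: prod_norm[symmetric])
  have ck: "(cmod \<kappa>)\<^sup>2 = 1 / real (N^r)" by (simp add: norm_divide power_divide)
  have cXY: "(cmod (\<Prod>c<r. X c + Y c))\<^sup>2 = (\<Prod>c<r. 4 * Gd cw (bxor w1 w2) (dig N c (h i)) (dig N c (h j)))"
    unfolding prod_norm[symmetric] prod_power_distrib X_def Y_def
    by (intro prod.cong refl) (rule XY_sq[OF lw])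
  have ck2: "(cmod (\<kappa>^k))\<^sup>2 = ((cmod \<kappa>)\<^sup>2)^k" by (metis norm_power power_mult mult.commute)
  have c2: "(cmod (1/2^r :: complex))\<^sup>2 = (1/2^r)^2" by (simp add: norm_divide norm_power)
  have "(cmod (\<Sum>g\<in>B. Tm N r cw i j y z h g * jstate k (Fst N r cw) x g))\<^sup>2
     = (cmod (1/2^r :: complex))\<^sup>2 * (cmod (\<kappa>^k))\<^sup>2 * (cmod R)\<^sup>2 * (cmod (\<Prod>c<r. X c + Y c))\<^sup>2"
    by (simp only: eq norm_mult power_mult_distrib)
  also have "\<dots> = (1/2^r)^2 * ((cmod \<kappa>)\<^sup>2)^k * (cmod R)\<^sup>2 * (cmod (\<Prod>c<r. X c + Y c))\<^sup>2"
    by (simp only: ck2 c2)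
  also have "\<dots> = (1/2^r)^2 * (1 / real (N^r))^k * (4^r * (\<Prod>c<r. Gd cw (bxor w1 w2) (dig N c (h i)) (dig N c (h j))))"
    unfolding ck cR cXY by (simp add: prod.distrib)
  also have "\<dots> = ((1/2^r)^2 * 4^r) * ((1 / real (N^r))^k * (\<Prod>c<r. Gd cw (bxor w1 w2) (dig N c (h i)) (dig N c (h j))))"
    by (simp only: mult_ac)
  also have "(1/2^r)^2 * 4^r = (1::real)"
  proof -
    have "(2::real)^r * 2^r = 4^r" by (simp flip: power_mult_distrib)
    then show ?thesis by (simp add: power2_eq_square)
  qed
  also have "1 * ((1 / real (N^r))^k * (\<Prod>c<r. Gd cw (bxor w1 w2) (dig N c (h i)) (dig N c (h j))))
     = (1 / real (N^r))^k * (\<Prod>c<r. Gd cw (bxor w1 w2) (dig N c (h i)) (dig N c (h j)))" by simp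
  finally show ?thesis unfolding w1_def w2_def .
qed

end



lemma prob_formula:
  assumes Npos: "0 < N" and Nrs: "N^r = 2^s" and ij: "i \<noteq> j" "i \<in> {1..k}" "j \<in> {1..k}"
    and xl: "\<forall>l\<in>{1..k}. length (x l) = n" and yl: "length y = n" and zl: "length z = n"
  shows "prob_one k s (Fst N r cw) x (Mm N r cw i j y z k s) =
     ((\<Sum>m<N. \<Sum>m'<N. Gd cw (bxor (bxor (x i) y) (bxor (x j) z)) m m') / (real N)^2)^r"
proof -
  define d where "d = bxor (bxor (x i) y) (bxor (x j) z)"
  let ?H = "\<lambda>a b. \<Prod>c<r. Gd cw d (dig N c a) (dig N c b)"
  have k2: "2 \<le> k" using ij by auto
  have "prob_one k s (Fst N r cw) x (Mm N r cw i j y z k s) = (\<Sum>h\<in>jbasis k s. (1 / real (N^r))^k * ?H (h i) (h j))"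
    unfolding prob_Mm d_def using point_val[OF assms] by (intro sum.cong refl) auto
  also have "\<dots> = (1 / real (N^r))^k * (\<Sum>h\<in>PiE {1..k} (\<lambda>_. {..<2^s}). ?H (h i) (h j))"
    by (simp add: sum_distrib_left jbasis_def)
  also have "(\<Sum>h\<in>PiE {1..k} (\<lambda>_. {..<2^s}). ?H (h i) (h j)) = real ((2^s)^(k-2)) * (\<Sum>a<2^s. \<Sum>b<2^s. ?H a b)"
    using ij by (subst sum_PiE_pair) auto
  also have "(\<Sum>a<2^s. \<Sum>b<2^s. ?H a b) = (\<Sum>m<N. \<Sum>m'<N. Gd cw d m m')^r"
    unfolding Nrs[symmetric] by (rule sum_dig_prod[OF Npos])
  also have "(1 / real (N^r))^k * (real ((2^s)^(k-2)) * (\<Sum>m<N. \<Sum>m'<N. Gd cw d m m')^r)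
     = ((\<Sum>m<N. \<Sum>m'<N. Gd cw d m m') / (real N)^2)^r"
  proof -
    have e: "real ((2^s)^(k-2)) = real (N^r)^(k-2)" unfolding Nrs[symmetric] by simp
    have "(1 / real (N^r))^k * real (N^r)^(k-2) = 1 / real (N^r)^2"
    proof -
      have "k = (k-2) + 2" using k2 by simp
      then have "(1 / real (N^r))^k = (1 / real (N^r))^(k-2) * (1 / real (N^r))^2"
        by (metis power_add)
      then show ?thesis using Npos by (simp add: power_divide field_simps)
    qed
    then have "(1 / real (N^r))^k * (real (N^r)^(k-2) * (\<Sum>m<N. \<Sum>m'<N. Gd cw d m m')^r)
      = (\<Sum>m<N. \<Sum>m'<N. Gd cw d m m')^r / real (N^r)^2"
      by (simp only: mult.assoc[symmetric]) simp
    also have "real (N^r)^2 = (real N ^ 2)^r" by (simp flip: power_mult add: mult.commute)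
    finally show ?thesis unfolding e by (simp add: power_divide)
  qed
  finally show ?thesis unfolding d_def by (simp add: mult.assoc)
qed



lemma ineq_27: assumes "2*n \<le> (L::nat)" shows "2^n * 16^L \<le> (27::nat)^L"
proof -
  have a: "(16::nat)^(L-2*n) \<le> 27^(L-2*n)" by (rule power_mono) auto
  have "(2::nat)^n * 16^(2*n) = (2*256)^n" by (simp only: power_mult power_mult_distrib) simp
  also have "\<dots> \<le> 729^n" by (rule power_mono) auto
  also have "\<dots> = 27^(2*n)" by (simp add: power_mult)
  finally have b: "(2::nat)^n * 16^(2*n) \<le> 27^(2*n)" .
  have "(2::nat)^n * 16^L = 16^(L-2*n) * (2^n * 16^(2*n))"
    using assms by (simp add: power_add[symmetric] mult_ac)
  also have "\<dots> \<le> 27^(L-2*n) * 27^(2*n)" using a b by (rule mult_le_mono)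
  also have "\<dots> = 27^L" using assms by (simp add: power_add[symmetric])
  finally show ?thesis .
qed

lemma ip_flip:
  assumes "p < length d" "d!p" "length v = length d"
  shows "ip (v[p := \<not> v!p]) d = (\<not> ip v d)"
proof -
  have "p < length v" using assms by simp
  let ?S = "{q. q < length d \<and> v!q \<and> d!q}"
  let ?S' = "{q. q < length d \<and> v[p := \<not> v!p]!q \<and> d!q}"
  have fin: "finite ?S" by simp
  show ?thesis
  proof (cases "v!p")
    case True
    then have "?S' = ?S - {p}" using \<open>p < length v\<close> assms by (auto simp: nth_list_update)
    moreover have pS: "p \<in> ?S" using True assms by auto
    moreover have "card ?S > 0" using fin pS card_gt_0_iff by blast
    ultimately have "card ?S = Suc (card ?S')" using fin by (simp add: card_Diff_singleton)
    then show ?thesis unfolding ip_def by simp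
  next
    case False
    then have "?S' = insert p ?S" using \<open>p < length v\<close> assms by (auto simp: nth_list_update)
    moreover have "p \<notin> ?S" using False by auto
    ultimately have "card ?S' = card ?S + 1" using fin by simp
    then show ?thesis unfolding ip_def by simp
  qed
qed



lemma half_card:
  assumes "d \<noteq> replicate n False" "length d = n"
  defines "V \<equiv> {v::bool list. length v = n}"
  shows "2 * card {v\<in>V. ip v d} = 2^n" and "2 * card (V - {v\<in>V. ip v d}) = 2^n"
proof -
  obtain p where p: "p < n" "d!p" using assms(1,2)
    by (metis (full_types) in_set_conv_nth replicate_eqI)
  let ?W = "{v\<in>V. ip v d}"
  let ?fl = "\<lambda>v::bool list. v[p := \<not> v!p]"
  have cV: "card V = 2^n"
    using card_lists_length_eq[of "UNIV::bool set" n] unfolding V_def by simp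
  have fV: "finite V" unfolding V_def using finite_lists_length_eq[of "UNIV::bool set" n] by simp
  have "bij_betw ?fl ?W (V - ?W)"
    by (rule bij_betw_byWitness[of _ ?fl]) (use p assms(2) in \<open>auto simp: V_def ip_flip\<close>)
  then have e: "card ?W = card (V - ?W)" by (rule bij_betw_same_card)
  have "card V = card ?W + card (V - ?W)"
    using fV by (metis (no_types, lifting) Diff_partition card_Un_disjoint finite_Diff finite_subset
        mem_Collect_eq subsetI Diff_disjoint)
  then show "2 * card ?W = 2^n" "2 * card (V - ?W) = 2^n" using e cV by auto
qed



lemma markov:
  fixes V U :: "'a set"
  assumes "finite V" "U \<subseteq> V"
  shows "card {g\<in>PiE {..<M} (\<lambda>_. V). T \<le> card {m. m<M \<and> g m \<in> U}} * 3^T \<le> (card V + 2*card U)^M"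
proof -
  let ?A = "PiE {..<M} (\<lambda>_. V)"
  let ?c = "\<lambda>g. card {m. m<M \<and> g m \<in> U}"
  let ?hb = "{g\<in>?A. T \<le> ?c g}"
  have fA: "finite ?A" using assms by (simp add: finite_PiE)
  have p3: "(3::nat)^(?c g) = (\<Prod>m<M. if g m \<in> U then 3 else 1)" for g
  proof -
    have "{..<M} \<inter> {m. g m \<in> U} = {m. m<M \<and> g m \<in> U}" by auto
    then show ?thesis by (simp add: prod.If_cases)
  qed
  have sV: "(\<Sum>v\<in>V. if v \<in> U then 3 else 1) = card V + 2 * card U"
  proof -
    have "(\<Sum>v\<in>V. if v \<in> U then 3 else (1::nat)) = 3 * card (V \<inter> U) + card (V \<inter> - U)"
      using assms by (simp add: sum.If_cases)
    moreover have "V \<inter> U = U" using assms by auto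
    moreover have "card (V \<inter> - U) = card V - card U"
      using assms by (metis Diff_eq card_Diff_subset finite_subset)
    moreover have "card U \<le> card V" using assms by (simp add: card_mono)
    ultimately show ?thesis by simp
  qed
  have "(\<Sum>g\<in>?A. (3::nat)^(?c g)) = (\<Sum>g\<in>?A. \<Prod>m<M. if g m \<in> U then 3 else 1)"
    by (simp only: p3)
  also have "\<dots> = (\<Prod>m<M. \<Sum>v\<in>V. if v \<in> U then 3 else 1)"
    using assms by (subst prod_sum_PiE) auto
  also have "\<dots> = (card V + 2*card U)^M" by (simp add: sV)
  finally have tot: "(\<Sum>g\<in>?A. (3::nat)^(?c g)) = (card V + 2*card U)^M" .
  have "card ?hb * 3^T = (\<Sum>g\<in>?hb. (3::nat)^T)" by simp
  also have "\<dots> \<le> (\<Sum>g\<in>?hb. 3^(?c g))" by (intro sum_mono power_increasing) auto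
  also have "\<dots> \<le> (\<Sum>g\<in>?A. 3^(?c g))" using fA by (intro sum_mono2) auto
  finally show ?thesis using tot by simp
qed

lemma code_exists:
  assumes "2*n \<le> L"
  shows "\<exists>cw. \<forall>d. length d = n \<and> d \<noteq> replicate n False \<longrightarrow>
      L \<le> card {m. m < 4*L \<and> ip (cw m) d} \<and> card {m. m < 4*L \<and> ip (cw m) d} \<le> 3*L"
proof -
  define V where "V = {v::bool list. length v = n}"
  define A where "A = PiE {..<4*L} (\<lambda>_. V)"
  define D where "D = V - {replicate n False}"
  define W where "W = (\<lambda>d. {v\<in>V. ip v d})"
  define hb where "hb = (\<lambda>U. {g\<in>A. 3*L+1 \<le> card {m. m<4*L \<and> g m \<in> U}})"
  have cV: "card V = 2^n"
    using card_lists_length_eq[of "UNIV::bool set" n] unfolding V_def by simp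
  have fV: "finite V" unfolding V_def using finite_lists_length_eq[of "UNIV::bool set" n] by simp
  have cA: "card A = 2^(n*(4*L))" unfolding A_def using fV by (simp add: card_PiE cV power_mult)
  have fD: "finite D" "card D \<le> 2^n" unfolding D_def using fV cV
    by (auto intro: order.trans[OF card_mono[of V]])
  have bnd: "card (hb U) * 3^(3*L+1) \<le> 2^(n*(4*L)) * 16^L" if "U \<subseteq> V" "2 * card U = 2^n" for U
  proof -
    have "card (hb U) * 3^(3*L+1) \<le> (card V + 2 * card U)^(4*L)"
      unfolding hb_def A_def by (rule markov[OF fV that(1)])
    also have "card V + 2 * card U = 2 * 2^n" using that cV by simp
    also have "(2 * 2^n)^(4*L) = 2^(4*L) * (2::nat)^(n*(4*L))" by (simp add: power_mult_distrib power_mult)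
    also have "(2::nat)^(4*L) = 16^L" by (simp add: power_mult)
    finally show ?thesis by (simp add: mult.commute)
  qed
  have hbd: "(card (hb (W d)) + card (hb (V - W d))) * 3^(3*L+1) \<le> 2 * (2^(n*(4*L)) * 16^L)" if "d \<in> D" for d
  proof -
    have d: "d \<noteq> replicate n False" "length d = n" using that unfolding D_def V_def by auto
    have "card (hb (W d)) * 3^(3*L+1) \<le> 2^(n*(4*L)) * 16^L"
      using half_card[OF d] unfolding W_def V_def by (intro bnd) (auto simp: V_def)
    moreover have "card (hb (V - W d)) * 3^(3*L+1) \<le> 2^(n*(4*L)) * 16^L"
      using half_card[OF d] unfolding W_def V_def by (intro bnd) (auto simp: V_def)
    ultimately show ?thesis by (simp add: add_mult_distrib)
  qed
  let ?Bad = "\<Union>d\<in>D. hb (W d) \<union> hb (V - W d)"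
  have "card ?Bad * 3^(3*L+1) \<le> (\<Sum>d\<in>D. card (hb (W d) \<union> hb (V - W d))) * 3^(3*L+1)"
    by (intro mult_le_mono1 card_UN_le[OF fD(1)])
  also have "\<dots> \<le> (\<Sum>d\<in>D. (card (hb (W d)) + card (hb (V - W d))) * 3^(3*L+1))"
    unfolding sum_distrib_right by (intro sum_mono mult_le_mono1 card_Un_le)
  also have "\<dots> \<le> (\<Sum>d\<in>D. 2 * (2^(n*(4*L)) * 16^L))"
    by (intro sum_mono hbd)
  also have "\<dots> = card D * (2 * (2^(n*(4*L)) * 16^L))" by simp
  finally have cB: "card ?Bad * 3^(3*L+1) \<le> card D * (2 * (2^(n*(4*L)) * 16^L))" .
  have "card D * (2 * (2^(n*(4*L)) * 16^L)) \<le> 2 * 2^(n*(4*L)) * (2^n * 16^L)"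
    using fD(2) by (simp add: mult_ac)
  also have "\<dots> \<le> 2 * 2^(n*(4*L)) * 27^L" using ineq_27[OF assms] by simp
  also have "\<dots> < 2^(n*(4*L)) * 3^(3*L+1)" by (simp add: power_mult)
  finally have X: "card D * (2 * (2^(n*(4*L)) * 16^L)) < 2^(n*(4*L)) * 3^(3*L+1)" .
  have "card ?Bad * 3^(3*L+1) < card A * 3^(3*L+1)" using le_less_trans[OF cB X] unfolding cA .
  then have lt: "card ?Bad < card A" by (simp only: mult_less_cancel2)
  have sub: "?Bad \<subseteq> A" unfolding hb_def by auto
  have fA: "finite A" unfolding A_def using fV by (simp add: finite_PiE)
  have fB: "finite ?Bad" by (rule rev_finite_subset[OF fA sub])
  have "\<not> A \<subseteq> ?Bad"
  proof
    assume "A \<subseteq> ?Bad"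
    then have "card A \<le> card ?Bad" by (rule card_mono[OF fB])
    with lt show False by simp
  qed
  then obtain g where gA: "g \<in> A" and gB: "g \<notin> ?Bad" by blast
  have gV: "m < 4*L \<Longrightarrow> g m \<in> V" for m using gA unfolding A_def by auto
  show ?thesis
  proof (intro exI allI impI)
    fix d assume d: "length d = n \<and> d \<noteq> replicate n False"
    then have dD: "d \<in> D" unfolding D_def V_def by auto
    have e1: "{m. m < 4*L \<and> g m \<in> W d} = {m. m < 4*L \<and> ip (g m) d}" using gV unfolding W_def by auto
    have e2: "{m. m < 4*L \<and> g m \<in> V - W d} = {m. m < 4*L \<and> \<not> ip (g m) d}" using gV unfolding W_def by auto
    have s: "card {m. m < 4*L \<and> ip (g m) d} + card {m. m < 4*L \<and> \<not> ip (g m) d} = 4*L"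
    proof -
      have "{..<4*L} = {m. m < 4*L \<and> ip (g m) d} \<union> {m. m < 4*L \<and> \<not> ip (g m) d}" by auto
      then have "card {..<4*L} = card ({m. m < 4*L \<and> ip (g m) d} \<union> {m. m < 4*L \<and> \<not> ip (g m) d})" by simp
      also have "\<dots> = card {m. m < 4*L \<and> ip (g m) d} + card {m. m < 4*L \<and> \<not> ip (g m) d}"
        by (intro card_Un_disjoint) auto
      finally show ?thesis by simp
    qed
    have "g \<notin> hb (W d)" "g \<notin> hb (V - W d)" using gB dD by auto
    then have "card {m. m < 4*L \<and> ip (g m) d} \<le> 3*L" "card {m. m < 4*L \<and> \<not> ip (g m) d} \<le> 3*L"
      using gA unfolding hb_def e1[symmetric] e2[symmetric] by auto
    then show "L \<le> card {m. m < 4*L \<and> ip (g m) d} \<and> card {m. m < 4*L \<and> ip (g m) d} \<le> 3*L"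
      using s by linarith
  qed
qed



lemma Gd_sum_zero: "(\<Sum>m<N. \<Sum>m'<N. Gd cw (replicate n False) m m') = real N ^ 2"
  by (simp add: Gd_def power2_eq_square)

lemma card_split_lt:
  "card {m. m < M \<and> P m} + card {m. m < M \<and> \<not> P m} = M"
proof -
  have "{..<M} = {m. m < M \<and> P m} \<union> {m. m < M \<and> \<not> P m}" by auto
  then have "card {..<M} = card ({m. m < M \<and> P m} \<union> {m. m < M \<and> \<not> P m})" by simp
  also have "\<dots> = card {m. m < M \<and> P m} + card {m. m < M \<and> \<not> P m}"
    by (intro card_Un_disjoint) auto
  finally show ?thesis by simp
qed

lemma Gd_sum_eq:
  fixes N :: nat and cw :: "nat \<Rightarrow> bool list" and d :: "bool list"
  defines "p \<equiv> card {m. m < N \<and> ip (cw m) d}"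
  shows "(\<Sum>m<N. \<Sum>m'<N. Gd cw d m m') = real p ^ 2 + real (N - p) ^ 2"
proof -
  let ?P = "\<lambda>m. ip (cw m) d"
  have q: "card {m. m < N \<and> \<not> ?P m} = N - p" using card_split_lt[of N ?P] unfolding p_def by simp
  have inner: "(\<Sum>m'<N. Gd cw d m m') = (if ?P m then real p else real (N - p))" for m
  proof -
    have "(\<Sum>m'<N. Gd cw d m m') = real (card ({..<N} \<inter> {m'. ?P m = ?P m'}))"
      unfolding Gd_def by (simp add: sum.If_cases)
    also have "{..<N} \<inter> {m'. ?P m = ?P m'} = (if ?P m then {m. m < N \<and> ?P m} else {m. m < N \<and> \<not> ?P m})"
      by auto
    finally show ?thesis using q unfolding p_def by (auto split: if_splits)
  qed
  have "(\<Sum>m<N. \<Sum>m'<N. Gd cw d m m') = (\<Sum>m<N. if ?P m then real p else real (N - p))"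
    by (simp add: inner)
  also have "\<dots> = real p * real (card ({..<N} \<inter> {m. ?P m})) + real (N-p) * real (card ({..<N} \<inter> - {m. ?P m}))"
    by (simp add: sum.If_cases)
  also have "{..<N} \<inter> {m. ?P m} = {m. m < N \<and> ?P m}" by auto
  also have "{..<N} \<inter> - {m. ?P m} = {m. m < N \<and> \<not> ?P m}" by auto
  finally show ?thesis using q unfolding p_def by (simp add: power2_eq_square)
qed

lemma Gd_sum_bound:
  assumes "L \<le> card {m. m < 4*L \<and> ip (cw m) d}" "card {m. m < 4*L \<and> ip (cw m) d} \<le> 3*L"
  shows "(\<Sum>m<4*L. \<Sum>m'<4*L. Gd cw d m m') / (real (4*L))^2 \<le> 5/8"
proof -
  define p where "p = card {m. m < 4*L \<and> ip (cw m) d}"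
  have lp: "real L \<le> real p" "real p \<le> 3 * real L" using assms unfolding p_def by auto
  have np: "real (4*L - p) = 4 * real L - real p" using assms unfolding p_def by (simp add: of_nat_diff)
  have "0 \<le> (real p - real L) * (3 * real L - real p)" using lp by (intro mult_nonneg_nonneg) auto
  then have "real p ^ 2 + (4 * real L - real p) ^ 2 \<le> 5/8 * (4 * real L)^2"
    by (simp add: power2_eq_square algebra_simps)
  moreover have "L > 0 \<or> L = 0" by auto
  ultimately show ?thesis
    unfolding Gd_sum_eq p_def[symmetric] np by (simp add: divide_le_eq)
qed



lemma prob_scaled:
  assumes "\<forall>l\<in>{1..k}. qstate s (F (x l))"
  shows "prob_one k s F x (\<lambda>f g. if f = g then complex_of_real c else 0) = c"
  unfolding prob_one_def qform_scaled_id[OF finite_jbasis] jstate_norm[OF assms] by simp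

lemma bxor_inj:
  assumes "length a = n" "length y = n" "length z = n" "bxor a y = bxor a z"
  shows "y = z"
proof (rule nth_equalityI)
  show "length y = length z" using assms by simp
  fix q assume "q < length y"
  have e: "bxor a y ! q = bxor a z ! q" using assms by simp
  have "(a!q \<noteq> y!q) = (a!q \<noteq> z!q)"
    using e nth_bxor[of q a y] nth_bxor[of q a z] \<open>q < length y\<close> assms by simp
  then show "y ! q = z ! q" by auto
qed

lemma scheme_ref:
  assumes NL: "N = 4*L" and Nrs: "N^r = 2^s" and Lpos: "0 < L"
    and code: "\<forall>d. length d = n \<and> d \<noteq> replicate n False \<longrightarrow>
      L \<le> card {m. m < 4*L \<and> ip (cw m) d} \<and> card {m. m < 4*L \<and> ip (cw m) d} \<le> 3*L"
    and eps: "(5/8)^r \<le> \<epsilon>" "0 < \<epsilon>"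
    and ij: "i \<in> {1..k}" "j \<in> {1..k}" and yz: "length y = n" "length z = n"
  shows "referee_computes k n s (Fst N r cw) \<epsilon> i j y z"
proof -
  have Npos: "0 < N" using NL Lpos by simp
  have qs: "\<forall>l\<in>{1..k}. qstate s (Fst N r cw (x l))" for x using qstate_Fst[OF Nrs] by simp
  show ?thesis
  proof (cases "i = j")
    case True
    show ?thesis
    proof (cases "y = z")
      case True
      show ?thesis unfolding referee_computes_def
        by (intro exI[of _ "\<lambda>f g. if f = g then complex_of_real 1 else 0"] conjI effect_scaled_id)
           (use \<open>i = j\<close> True eps in \<open>auto simp: prob_scaled[OF qs] MEQ_def\<close>)
    next
      case False
      have "\<not> MEQ x i j y z" if "\<forall>l\<in>{1..k}. length (x l) = n" for x
        using bxor_inj[of "x i" n y z] that ij yz False \<open>i = j\<close> unfolding MEQ_def by auto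
      then show ?thesis unfolding referee_computes_def
        by (intro exI[of _ "\<lambda>f g. if f = g then complex_of_real 0 else 0"] conjI effect_scaled_id)
           (use eps in \<open>auto simp: prob_scaled[OF qs]\<close>)
    qed
  next
    case False
    show ?thesis unfolding referee_computes_def
    proof (intro exI[of _ "Mm N r cw i j y z k s"] conjI allI impI)
      show "effect (jbasis k s) (Mm N r cw i j y z k s)" by (rule Mm_effect[OF Npos Nrs False ij])
      fix x :: "nat \<Rightarrow> bool list" assume xl: "\<forall>l\<in>{1..k}. length (x l) = n"
      define d where "d = bxor (bxor (x i) y) (bxor (x j) z)"
      have pf: "prob_one k s (Fst N r cw) x (Mm N r cw i j y z k s) =
         ((\<Sum>m<N. \<Sum>m'<N. Gd cw d m m') / (real N)^2)^r"
        unfolding d_def by (rule prob_formula[OF Npos Nrs False ij xl yz])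
      have l1: "length (bxor (x i) y) = n" "length (bxor (x j) z) = n" using xl ij yz by auto
      have dl: "length d = n" unfolding d_def using l1 by simp
      show "if MEQ x i j y z then 1 - \<epsilon> \<le> prob_one k s (Fst N r cw) x (Mm N r cw i j y z k s)
            else 1 - \<epsilon> \<le> 1 - prob_one k s (Fst N r cw) x (Mm N r cw i j y z k s)"
      proof (cases "MEQ x i j y z")
        case True
        then have "d = replicate n False" unfolding d_def MEQ_def using bxor_eq_zero[OF l1] by simp
        then have "prob_one k s (Fst N r cw) x (Mm N r cw i j y z k s) = 1"
          unfolding pf using Npos by (simp only: Gd_sum_zero) simp
        then show ?thesis using True eps by simp
      next
        case False
        then have "d \<noteq> replicate n False" unfolding d_def MEQ_def using bxor_eq_zero[OF l1] by simp
        then have b: "(\<Sum>m<N. \<Sum>m'<N. Gd cw d m m') / (real N)^2 \<le> 5/8"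
          unfolding NL using code dl Gd_sum_bound by blast
        have "prob_one k s (Fst N r cw) x (Mm N r cw i j y z k s) \<le> (5/8)^r"
          unfolding pf by (intro power_mono b divide_nonneg_nonneg sum_nonneg) (auto simp: Gd_def)
        then show ?thesis using False eps by simp
      qed
    qed
  qed
qed

lemma scheme_half:
  assumes "1/2 \<le> \<epsilon>"
  shows "referee_computes k n 0 (Fst 1 0 cw) \<epsilon> i j y z"
proof -
  have qs: "\<forall>l\<in>{1..k}. qstate 0 (Fst (Suc 0) 0 cw (x l))" for x using qstate_Fst[of "Suc 0" 0 0] by simp
  have p: "prob_one k 0 (Fst (Suc 0) 0 cw) x (\<lambda>f g. if f = g then complex_of_real (1/2) else 0) = 1/2" for x
    by (rule prob_scaled[OF qs])
  show ?thesis unfolding referee_computes_def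
    by (intro exI[of _ "\<lambda>f g. if f = g then complex_of_real (1/2) else 0"] conjI effect_scaled_id)
       (use assms in \<open>auto simp: p\<close>)
qed



lemma ln2_ge_half: "1/2 \<le> ln (2::real)"
proof -
  have "exp (1/2::real) * exp (1/2) = exp 1" by (simp flip: exp_add)
  also have "\<dots> \<le> 3" by (rule exp_le)
  finally have e: "exp (1/2::real) * exp (1/2) \<le> 3" .
  have "exp (1/2::real) \<le> 2"
  proof (rule ccontr)
    assume "\<not> exp (1/2::real) \<le> 2"
    then have "2 < exp (1/2::real)" by simp
    then have "2 * 2 < exp (1/2::real) * exp (1/2)" by (intro mult_strict_mono) auto
    with e show False by simp
  qed
  then show ?thesis by (subst ln_ge_iff) auto
qed

lemma pow_ceil_log:
  assumes "1 \<le> x"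
  shows "x \<le> real (2 ^ nat \<lceil>log 2 x\<rceil>)" and "real (nat \<lceil>log 2 x\<rceil>) \<le> log 2 x + 1"
    and "log 2 x \<le> real (nat \<lceil>log 2 x\<rceil>)"
proof -
  have l0: "0 \<le> log 2 x" using assms by simp
  have c: "real (nat \<lceil>log 2 x\<rceil>) = real_of_int \<lceil>log 2 x\<rceil>" using l0 by simp
  show "log 2 x \<le> real (nat \<lceil>log 2 x\<rceil>)" unfolding c by (rule le_of_int_ceiling)
  then have "2 powr log 2 x \<le> 2 powr real (nat \<lceil>log 2 x\<rceil>)" by (intro powr_mono) auto
  moreover have "(2::real) powr real (nat \<lceil>log 2 x\<rceil>) = 2 ^ (nat \<lceil>log 2 x\<rceil>)" by (rule powr_realpow) simp
  moreover have "(2::real) powr log 2 x = x" using assms by simp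
  ultimately show "x \<le> real (2 ^ nat \<lceil>log 2 x\<rceil>)" by simp
  show "real (nat \<lceil>log 2 x\<rceil>) \<le> log 2 x + 1" unfolding c by (rule of_int_ceiling_le_add_one)
qed

lemma main_case:
  fixes n k :: nat and \<epsilon> :: real
  assumes n2: "2 \<le> n" and k2: "2 \<le> k" and e0: "0 < \<epsilon>" and e1: "\<epsilon> < 1"
  shows "\<exists>s F. real s \<le> 100 * ln (real n) * ln (1 / \<epsilon>) \<and>
         (\<forall>u. length u = n \<longrightarrow> qstate s (F u)) \<and>
         (\<forall>i\<in>{1..k}. \<forall>j\<in>{1..k}. \<forall>y z. length y = n \<longrightarrow> length z = n \<longrightarrow>
            referee_computes k n s F \<epsilon> i j y z)"
proof -
  have lnn: "0 \<le> ln (real n)" using n2 by simp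
  have lne: "0 < ln (1/\<epsilon>)" using e0 e1 by simp
  show ?thesis
  proof (cases "1/2 \<le> \<epsilon>")
    case True
    show ?thesis
    proof (intro exI[of _ 0] exI[of _ "Fst 1 0 (\<lambda>_. [])"] conjI allI impI ballI)
      show "real 0 \<le> 100 * ln (real n) * ln (1 / \<epsilon>)" using lnn lne by simp
      show "qstate 0 (Fst 1 0 (\<lambda>_. []) u)" for u by (rule qstate_Fst) simp
      show "referee_computes k n 0 (Fst 1 0 (\<lambda>_. [])) \<epsilon> i j y z" for i j y z
        by (rule scheme_half[OF True])
    qed
  next
    case False
    then have eh: "\<epsilon> < 1/2" by simp
    define a where "a = nat \<lceil>log 2 (real n)\<rceil>"
    define b where "b = nat \<lceil>log 2 (1/\<epsilon>)\<rceil>"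
    define t where "t = a + 3"
    define L where "L = (2::nat)^(a+1)"
    define N where "N = (2::nat)^t"
    define r where "r = 2*b"
    define s where "s = t*r"
    have n1: "1 \<le> real n" using n2 by simp
    have ie: "1 \<le> 1/\<epsilon>" using e0 e1 by simp
    have "real n \<le> real (2^a)" unfolding a_def by (rule pow_ceil_log(1)[OF n1])
    then have "n \<le> 2^a" by linarith
    then have nL: "2*n \<le> L" unfolding L_def by simp
    obtain cw where code: "\<forall>d. length d = n \<and> d \<noteq> replicate n False \<longrightarrow>
      L \<le> card {m. m < 4*L \<and> ip (cw m) d} \<and> card {m. m < 4*L \<and> ip (cw m) d} \<le> 3*L"
      using code_exists[OF nL] by blast
    have NL: "N = 4*L" unfolding N_def L_def t_def by (simp add: power_add)
    have Nrs: "N^r = 2^s" unfolding N_def s_def by (simp add: power_mult)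
    have Lpos: "0 < L" unfolding L_def by simp
    have "(5/8::real)^r = (25/64)^b" unfolding r_def by (simp add: power_mult power2_eq_square)
    also have "\<dots> \<le> (1/2)^b" by (intro power_mono) auto
    also have "\<dots> \<le> \<epsilon>"
    proof -
      have "1/\<epsilon> \<le> real (2^b)" unfolding b_def by (rule pow_ceil_log(1)[OF ie])
      then have "1 \<le> \<epsilon> * 2^b" using e0 by (simp add: field_simps)
      then show ?thesis by (simp add: power_one_over field_simps)
    qed
    finally have eps: "(5/8::real)^r \<le> \<epsilon>" .
    have sb: "real s \<le> 100 * ln (real n) * ln (1 / \<epsilon>)"
    proof -
      let ?x = "log 2 (real n)" and ?y = "log 2 (1/\<epsilon>)"
      have x1: "1 \<le> ?x" using n2 by simp
      have y1: "1 \<le> ?y" using eh e0 by (simp add: field_simps)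
      have pa: "real a \<le> ?x + 1" unfolding a_def by (rule pow_ceil_log(2)[OF n1])
      have pb: "real b \<le> ?y + 1" unfolding b_def by (rule pow_ceil_log(2)[OF ie])
      have "real t = real a + 3" unfolding t_def by simp
      then have ta: "real t \<le> 5 * ?x" using pa x1 by linarith
      have "real r = 2 * real b" unfolding r_def by simp
      then have rb: "real r \<le> 4 * ?y" using pb y1 by linarith
      have "real s = real t * real r" unfolding s_def by simp
      also have "\<dots> \<le> (5 * ?x) * (4 * ?y)" using ta rb by (intro mult_mono) auto
      also have "\<dots> = 20 * (ln (real n) * ln (1/\<epsilon>)) / (ln 2)^2" by (simp add: log_def power2_eq_square)
      also have "\<dots> \<le> 20 * (ln (real n) * ln (1/\<epsilon>)) / (1/4)"
      proof (rule divide_left_mono)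
        have "(1/2)^2 \<le> (ln (2::real))^2" using ln2_ge_half by (intro power_mono) auto
        then show "1/4 \<le> (ln (2::real))^2" by (simp add: power2_eq_square)
      qed (use lnn lne in auto)
      also have "\<dots> \<le> 100 * ln (real n) * ln (1 / \<epsilon>)" using lnn lne by (simp add: mult_nonneg_nonneg)
      finally show ?thesis .
    qed
    show ?thesis
      apply (rule exI[of _ s], rule exI[of _ "Fst N r cw"])
      using sb qstate_Fst[OF Nrs] scheme_ref[OF NL Nrs Lpos code eps e0] by blast
  qed
qed

theorem lemma1:
  shows "\<exists>C::real. C > 0 \<and>
    (\<forall>n k::nat. \<forall>\<epsilon>::real. n \<ge> 2 \<longrightarrow> k \<ge> 2 \<longrightarrow> 0 < \<epsilon> \<longrightarrow> \<epsilon> < 1 \<longrightarrow>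
      (\<exists>s::nat. \<exists>F :: bool list \<Rightarrow> nat \<Rightarrow> complex.
         real s \<le> C * ln (real n) * ln (1 / \<epsilon>) \<and>
         (\<forall>u. length u = n \<longrightarrow> qstate s (F u)) \<and>
         (\<forall>i\<in>{1..k}. \<forall>j\<in>{1..k}. \<forall>y z. length y = n \<longrightarrow> length z = n \<longrightarrow>
            referee_computes k n s F \<epsilon> i j y z)))"
proof (rule exI[of _ 100], intro conjI allI impI)
  show "(0::real) < 100" by simp
  fix n k :: nat and \<epsilon> :: real
  assume "2 \<le> n" "2 \<le> k" "0 < \<epsilon>" "\<epsilon> < 1"
  then show "\<exists>s F. real s \<le> 100 * ln (real n) * ln (1 / \<epsilon>) \<and>
         (\<forall>u. length u = n \<longrightarrow> qstate s (F u)) \<and>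
         (\<forall>i\<in>{1..k}. \<forall>j\<in>{1..k}. \<forall>y z. length y = n \<longrightarrow> length z = n \<longrightarrow>
            referee_computes k n s F \<epsilon> i j y z)"
    by (rule main_case)
qed


end
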